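(* Let $f:[0,\infty)\to(0,\infty)$ and $g:[0,\infty)\to(0,\infty)$, with $f$ non-decreasing. Define $\mu_t=\int_0^t g(s)\,ds$ and $\sigma^2_t=\int_0^t f(s)g(s)\,ds$. Then $\sigma^2$ may be expressed as a function of $\mu$, and \[ \frac{ d \log \sigma^{2}}{d \log \mu } = \frac{\mu}{\sigma^{2}}\, f\!\left( G^{-1}(\mu) \right), \] where $G^{-1}$ is the function with $G^{-1}(\mu_t)=t$. Furthermore, \[ \frac{d \log \sigma^{2}}{d \log \mu} \geq 1, \] with equality if and only if $f(s)=f(G^{-1}(\mu))$ for all $s\in[0,G^{-1}(\mu)]$. *)

theory Defs
  imports "HOL-Analysis.Analysis"
begin

definition mu :: "(real \<Rightarrow> real) \<Rightarrow> real \<Rightarrow> real" where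
  "mu g t = integral {0..t} g"

definition sigma2 :: "(real \<Rightarrow> real) \<Rightarrow> (real \<Rightarrow> real) \<Rightarrow> real \<Rightarrow> real" where
  "sigma2 f g t = integral {0..t} (\<lambda>s. f s * g s)"

definition Ginv :: "(real \<Rightarrow> real) \<Rightarrow> real \<Rightarrow> real" where
  "Ginv g = the_inv_into {0..} (mu g)"

definition sigma2_of_mu :: "(real \<Rightarrow> real) \<Rightarrow> (real \<Rightarrow> real) \<Rightarrow> real \<Rightarrow> real" where
  "sigma2_of_mu f g m = sigma2 f g (Ginv g m)"

end

theory Submission
  imports Defs
begin

lemma int_deriv_at:
  fixes h :: "real \<Rightarrow> real"
  assumes hc: "continuous_on {0..} h" and t: "t > 0"
  shows "((\<lambda>u. integral {0..u} h) has_real_derivative h t) (at t)"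
proof -
  have c: "continuous_on {0..t+1} h" using hc by (rule continuous_on_subset) auto
  have tin: "t \<in> {0..t+1}" using t by simp
  have d: "((\<lambda>u. integral {0..u} h) has_vector_derivative h t) (at t within {0..t+1})"
    by (rule integral_has_vector_derivative[OF c tin])
  have "t \<in> {0<..<t+1}" using t by simp
  hence ti: "t \<in> interior {0..t+1}" by (simp only: interior_atLeastAtMost_real)
  have "((\<lambda>u. integral {0..u} h) has_vector_derivative h t) (at t)"
    using d unfolding at_within_interior[OF ti] .
  thus ?thesis by (simp only: has_real_derivative_iff_has_vector_derivative)
qed

lemma int_pos:
  fixes h :: "real \<Rightarrow> real"
  assumes hc: "continuous_on {0..} h" and hp: "\<forall>s\<ge>0. h s > 0" and ab: "0 \<le> a" "a < b"
  shows "integral {a..b} h > 0"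
proof -
  have c: "continuous_on {a..b} h" using hc by (rule continuous_on_subset) (use ab in auto)
  have int: "h integrable_on {a..b}" using c integrable_continuous_real by blast
  have nn: "0 \<le> h x" if "x \<in> {a..b}" for x
  proof -
    have "x \<ge> 0" using that ab by simp
    thus ?thesis using hp by (simp add: less_imp_le)
  qed
  have ge: "integral {a..b} h \<ge> 0"
    by (rule integral_nonneg[OF int nn])
  moreover have "integral {a..b} h \<noteq> 0"
  proof
    assume z: "integral {a..b} h = 0"
    have hi: "(h has_integral 0) (cbox a b)"
      unfolding cbox_interval using has_integral_integral[THEN iffD1, OF int] unfolding z .
    have c': "continuous_on (cbox a b) h" unfolding cbox_interval by (rule c)
    have nn': "0 \<le> h x" if "x \<in> box a b" for x
      apply (rule nn) using that by (simp add: box_real)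
    have ne: "box a b \<noteq> {}" using ab by (simp add: box_real)
    have sc: "a \<in> cbox a b" using ab by (simp add: cbox_interval)
    have "h a = 0" by (rule has_integral_0_cbox_imp_0[OF c' nn' hi ne sc])
    with hp ab show False by auto
  qed
  ultimately show ?thesis by auto
qed

lemma int_split:
  fixes h :: "real \<Rightarrow> real"
  assumes hc: "continuous_on {0..} h" and ab: "0 \<le> a" "a \<le> b"
  shows "integral {0..b} h = integral {0..a} h + integral {a..b} h"
proof -
  have c: "continuous_on {0..b} h" using hc by (rule continuous_on_subset) (use ab in auto)
  have int: "h integrable_on {0..b}" using c integrable_continuous_real by blast
  show ?thesis using Henstock_Kurzweil_Integration.integral_combine[OF ab int] by simp
qed

theorem lemma1:
  fixes f g :: "real \<Rightarrow> real"
  assumes fpos: "\<forall>s\<ge>0. f s > 0"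
    and gpos: "\<forall>s\<ge>0. g s > 0"
    and fmono: "mono_on {0..} f"
    and fcont: "continuous_on {0..} f"
    and gcont: "continuous_on {0..} g"
  shows "(\<forall>t\<ge>0. Ginv g (mu g t) = t \<and> sigma2 f g t = sigma2_of_mu f g (mu g t))
    \<and> (\<forall>t>0. let m = mu g t;
                 r = m / sigma2_of_mu f g m * f (Ginv g m)
             in ((\<lambda>x. ln (sigma2_of_mu f g (exp x))) has_real_derivative r) (at (ln m))
                \<and> r \<ge> 1
                \<and> (r = 1 \<longleftrightarrow> (\<forall>s\<in>{0..Ginv g m}. f s = f (Ginv g m))))"
proof -
  have fgc: "continuous_on {0..} (\<lambda>s. f s * g s)"
    using fcont gcont by (intro continuous_intros)
  have fgp: "\<forall>s\<ge>0. f s * g s > 0" using fpos gpos by auto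
  have smono: "mu g a < mu g b" if "0 \<le> a" "a < b" for a b
    using int_split[OF gcont, of a b] int_pos[OF gcont gpos, of a b] that
    unfolding mu_def by auto
  have inj: "inj_on (mu g) {0..}"
    by (rule linorder_inj_onI') (metis atLeast_iff less_irrefl smono)
  have Gi: "Ginv g (mu g t) = t" if "t \<ge> 0" for t
    unfolding Ginv_def using the_inv_into_f_f[OF inj] that by auto
  have part1: "\<forall>t\<ge>0. Ginv g (mu g t) = t \<and> sigma2 f g t = sigma2_of_mu f g (mu g t)"
    using Gi by (simp add: sigma2_of_mu_def)
  have part2: "let m = mu g t;
                 r = m / sigma2_of_mu f g m * f (Ginv g m)
             in ((\<lambda>x. ln (sigma2_of_mu f g (exp x))) has_real_derivative r) (at (ln m))
                \<and> r \<ge> 1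
                \<and> (r = 1 \<longleftrightarrow> (\<forall>s\<in>{0..Ginv g m}. f s = f (Ginv g m)))"
    if t: "t > 0" for t
  proof -
    define m where "m = mu g t"
    define S where "S = sigma2 f g t"
    have mpos: "m > 0" using int_pos[OF gcont gpos, of 0 t] t unfolding m_def mu_def by auto
    have Spos: "S > 0" using int_pos[OF fgc fgp, of 0 t] t unfolding S_def sigma2_def by auto
    have Gm: "Ginv g m = t" using Gi t m_def by auto
    have som: "sigma2_of_mu f g m = S" using Gm by (simp add: sigma2_of_mu_def S_def)
    have dmu: "(mu g has_real_derivative g x) (at x)" if "x > 0" for x
      using int_deriv_at[OF gcont that] unfolding mu_def[abs_def] by simp
    have contmu: "continuous_on {0<..} (mu g)"
    proof (rule continuous_at_imp_continuous_on, rule ballI)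
      fix x :: real assume "x \<in> {0<..}"
      hence "x > 0" by simp
      from dmu[OF this] show "isCont (mu g) x" by (rule DERIV_isCont)
    qed
    have gt: "g t > 0" using gpos t by auto
    have dG: "(Ginv g has_real_derivative inverse (g t)) (at (mu g t))"
    proof -
      have o: "open {0::real<..}" by simp
      have tS: "t \<in> {0<..}" using t by simp
      have gf: "\<And>x. x \<in> {0<..} \<Longrightarrow> Ginv g (mu g x) = x" using Gi by simp
      have dm: "(mu g has_derivative (*) (g t)) (at t)"
        using dmu[OF t] by (simp add: has_field_derivative_def)
      have idd: "(*) (g t) \<circ> (*) (inverse (g t)) = id" using gt by (simp add: fun_eq_iff)
      show ?thesis unfolding has_field_derivative_def
        by (rule has_derivative_inverse_strong[of "{0<..}" t "mu g" "Ginv g" "(*) (g t)" "(*) (inverse (g t))", OF o tS contmu gf dm idd])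
    qed
    have dS: "(sigma2 f g has_real_derivative f t * g t) (at t)"
      using int_deriv_at[OF fgc t] unfolding sigma2_def[abs_def] by simp
    have dSm: "(sigma2_of_mu f g has_real_derivative f t) (at m)"
    proof -
      have "((sigma2 f g \<circ> Ginv g) has_real_derivative f t * g t * inverse (g t)) (at m)"
        using DERIV_chain[of "sigma2 f g" "f t * g t" "Ginv g" m "inverse (g t)"] dS dG Gm m_def
        by simp
      moreover have "f t * g t * inverse (g t) = f t" using gt by simp
      ultimately show ?thesis by (simp add: sigma2_of_mu_def[abs_def] o_def)
    qed
    have dE: "((\<lambda>x. sigma2_of_mu f g (exp x)) has_real_derivative f t * exp (ln m)) (at (ln m))"
      using DERIV_chain2[OF _ DERIV_exp, of "sigma2_of_mu f g" "f t" "ln m"] dSm mpos by simp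
    have dL: "((\<lambda>x. ln (sigma2_of_mu f g (exp x))) has_real_derivative
               inverse S * (f t * exp (ln m))) (at (ln m))"
      using DERIV_chain2[OF DERIV_ln dE] Spos som mpos by simp
    have req: "inverse S * (f t * exp (ln m)) = m / S * f t" using mpos by (simp add: field_simps)
    have int_g: "g integrable_on {0..t}"
      using gcont by (intro integrable_continuous_real continuous_on_subset[OF gcont]) auto
    have int_fg: "(\<lambda>s. f s * g s) integrable_on {0..t}"
      by (intro integrable_continuous_real continuous_on_subset[OF fgc]) auto
    have fle: "f s \<le> f t" if "s \<in> {0..t}" for s
      using fmono that unfolding mono_on_def by auto
    have i1: "(\<lambda>s. f t * g s) integrable_on {0..t}"
      using integrable_on_cmult_left[OF int_g] by simp
    have int_d: "(\<lambda>s. f t * g s - f s * g s) integrable_on {0..t}"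
      by (rule integrable_diff[OF i1 int_fg])
    have diff_int: "integral {0..t} (\<lambda>s. f t * g s - f s * g s) = f t * m - S"
    proof -
      have "integral {0..t} (\<lambda>s. f t * g s - f s * g s)
          = integral {0..t} (\<lambda>s. f t * g s) - integral {0..t} (\<lambda>s. f s * g s)"
        by (rule integral_diff[OF i1 int_fg])
      also have "\<dots> = f t * m - S"
        unfolding m_def S_def mu_def sigma2_def by (simp only: integral_mult_right)
      finally show ?thesis .
    qed
    have nonneg: "f t * g s - f s * g s \<ge> 0" if "s \<in> {0..t}" for s
    proof -
      have a: "f t - f s \<ge> 0" using fle[OF that] by simp
      have b: "g s \<ge> 0" using gpos that by (auto intro: less_imp_le)
      have "(f t - f s) * g s \<ge> 0" using mult_nonneg_nonneg[OF a b] .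
      thus ?thesis by (simp add: algebra_simps)
    qed
    have SleT: "S \<le> f t * m"
    proof -
      have "integral {0..t} (\<lambda>s. f t * g s - f s * g s) \<ge> 0"
        by (rule integral_nonneg[OF int_d]) (use nonneg in blast)
      thus ?thesis using diff_int by simp
    qed
    have r1: "m / S * f t \<ge> 1" using SleT Spos by (simp add: field_simps)
    have eq: "m / S * f t = 1 \<longleftrightarrow> (\<forall>s\<in>{0..t}. f s = f t)"
    proof
      assume "m / S * f t = 1"
      hence z: "f t * m - S = 0" using Spos by (simp add: field_simps)
      have dc: "continuous_on {0..t} (\<lambda>s. f t * g s - f s * g s)"
      proof -
        have c1: "continuous_on {0..t} g" by (rule continuous_on_subset[OF gcont]) auto
        have c2: "continuous_on {0..t} (\<lambda>s. f s * g s)" by (rule continuous_on_subset[OF fgc]) auto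
        show ?thesis by (intro continuous_on_diff continuous_on_mult continuous_on_const c1 c2)
      qed
      show "\<forall>s\<in>{0..t}. f s = f t"
      proof
        fix s assume s: "s \<in> {0..t}"
        have hi: "((\<lambda>s. f t * g s - f s * g s) has_integral 0) (cbox 0 t)"
          unfolding cbox_interval
          using has_integral_integral[THEN iffD1, OF int_d] unfolding diff_int[unfolded z] .
        have dc': "continuous_on (cbox 0 t) (\<lambda>s. f t * g s - f s * g s)"
          unfolding cbox_interval by (rule dc)
        have nn: "0 \<le> f t * g x - f x * g x" if "x \<in> box 0 t" for x
          apply (rule nonneg) using that by (simp add: box_real)
        have ne: "box 0 t \<noteq> {}" using t by (simp add: box_real)
        have sc: "s \<in> cbox 0 t" using s by (simp add: cbox_interval)
        have "f t * g s - f s * g s = 0"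
          by (rule has_integral_0_cbox_imp_0[OF dc' nn hi ne sc])
        hence "(f t - f s) * g s = 0" by (simp add: left_diff_distrib)
        thus "f s = f t" using gpos s by auto
      qed
    next
      assume h: "\<forall>s\<in>{0..t}. f s = f t"
      have "integral {0..t} (\<lambda>s. f t * g s - f s * g s) = integral {0..t} (\<lambda>s. 0)"
      proof (rule integral_cong)
        fix x assume "x \<in> {0..t}"
        hence "f x = f t" using h by blast
        thus "f t * g x - f x * g x = 0" by simp
      qed
      hence "f t * m - S = 0" using diff_int by simp
      thus "m / S * f t = 1" using Spos by (simp add: field_simps)
    qed
    have d: "((\<lambda>x. ln (sigma2_of_mu f g (exp x))) has_real_derivative m / S * f t) (at (ln m))"
      using dL unfolding req .
    show ?thesis unfolding Let_def m_def[symmetric] som Gm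
      by (intro conjI d r1 eq)
  qed
  have part2': "\<forall>t>0. let m = mu g t;
                 r = m / sigma2_of_mu f g m * f (Ginv g m)
             in ((\<lambda>x. ln (sigma2_of_mu f g (exp x))) has_real_derivative r) (at (ln m))
                \<and> r \<ge> 1
                \<and> (r = 1 \<longleftrightarrow> (\<forall>s\<in>{0..Ginv g m}. f s = f (Ginv g m)))"
    by (rule allI, rule impI, rule part2)
  show ?thesis by (rule conjI[OF part1 part2'])
qed

end
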